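(* Every ordered graph $F$ on $k$ vertices that does not contain a monotone path of length two satisfies $\rho_{<}(F)\le\rho_{<}(H_k)$.
   Context: An ordered graph is a graph with a totally ordered vertex set. An ordered graph $G$ contains $F$ if there is an injective order-preserving map $V(F)\to V(G)$ sending edges to edges; otherwise $G$ is $F$-free. $\rho_{<}(F,G)=\max\{e(G')/e(G): G'\subseteq G,\ G'\ F\text{-free}\}$ and $\rho_{<}(F)=\inf_G\rho_{<}(F,G)$ over all ordered graphs $G$. A monotone path of length two consists of vertices $u<v<w$ with $uv,vw$ edges. $H_k$ is the ordered graph on $[k]\times\{0,1\}$, ordered lexicographically, with edge set $\{(x,0)(y,1): x\le y\}$. *)

theory Defs
  imports Complex_Main
begin

text \<open>An ordered graph on n vertices is represented (up to order-isomorphism) by the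
vertex set {0..<n} with the natural order, and an edge set E of pairs (i,j) with i < j < n
(each edge stored once, smaller endpoint first).\<close>

definition ordgraph :: "nat \<Rightarrow> (nat \<times> nat) set \<Rightarrow> bool" where
  "ordgraph n E \<longleftrightarrow> E \<subseteq> {(i,j). i < j \<and> j < n}"

definition contains :: "nat \<Rightarrow> (nat \<times> nat) set \<Rightarrow> nat \<Rightarrow> (nat \<times> nat) set \<Rightarrow> bool" where
  "contains k F n G \<longleftrightarrow>
     (\<exists>f. strict_mono_on {..<k} f \<and> f ` {..<k} \<subseteq> {..<n} \<and>
          (\<forall>(i,j)\<in>F. (f i, f j) \<in> G))"

text \<open>The 0 is inserted only so that the maximum is defined when no F-free subgraph exists
(possible only if F has no edges); all ratios are nonnegative anyway.\<close>
definition rho_FG :: "nat \<Rightarrow> (nat \<times> nat) set \<Rightarrow> nat \<Rightarrow> (nat \<times> nat) set \<Rightarrow> real" where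
  "rho_FG k F n G = Max (insert 0
     {real (card G') / real (card G) | G'. G' \<subseteq> G \<and> \<not> contains k F n G'})"

definition rho :: "nat \<Rightarrow> (nat \<times> nat) set \<Rightarrow> real" where
  "rho k F = Inf {rho_FG k F n G | n G. ordgraph n G \<and> G \<noteq> {}}"

definition has_monotone_P2 :: "(nat \<times> nat) set \<Rightarrow> bool" where
  "has_monotone_P2 F \<longleftrightarrow> (\<exists>u v w. u < v \<and> v < w \<and> (u,v) \<in> F \<and> (v,w) \<in> F)"

text \<open>H_k on [k] x {0,1} ordered lexicographically; we index [k] by 0..<k and use the
order-isomorphism (x,b) |-> 2x+b onto {0..<2k}. Edges (x,0)(y,1) with x \<le> y.\<close>
definition lexidx :: "nat \<times> nat \<Rightarrow> nat" where
  "lexidx p = 2 * fst p + snd p"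

definition H_edges :: "nat \<Rightarrow> (nat \<times> nat) set" where
  "H_edges k = {(lexidx (x,0), lexidx (y,1)) | x y. x \<le> y \<and> y < k}"

end

theory Submission
  imports Defs
begin

lemma embed_F_H:
  assumes "ordgraph k F" and "\<not> has_monotone_P2 F"
  shows "contains k F (2*k) (H_edges k)"
proof -
  define \<phi> where "\<phi> v = 2*v + (if \<exists>u. (u,v) \<in> F then 1 else 0)" for v :: nat
  have sm: "strict_mono_on {..<k} \<phi>"
    unfolding strict_mono_on_def \<phi>_def by auto
  have rg: "\<phi> ` {..<k} \<subseteq> {..<2*k}"
    unfolding \<phi>_def by auto
  have ed: "(\<phi> u, \<phi> v) \<in> H_edges k" if "(u,v) \<in> F" for u v
  proof -
    have uv: "u < v" "v < k" using assms(1) that unfolding ordgraph_def by auto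
    have "\<not> (\<exists>w. (w,u) \<in> F)"
    proof
      assume "\<exists>w. (w,u) \<in> F"
      then obtain w where w: "(w,u) \<in> F" by blast
      then have "w < u" using assms(1) unfolding ordgraph_def by auto
      then show False using assms(2) w that uv unfolding has_monotone_P2_def by blast
    qed
    then have "\<phi> u = lexidx (u,0)" "\<phi> v = lexidx (v,1)"
      using that unfolding \<phi>_def lexidx_def by auto
    moreover have "(lexidx (u,0), lexidx (v,1)) \<in> H_edges k"
      unfolding H_edges_def using uv by (intro CollectI exI[of _ u] exI[of _ v]) simp
    ultimately show ?thesis by simp
  qed
  show ?thesis unfolding contains_def using sm rg ed by blast
qed

lemma contains_trans:
  assumes "contains k F m H" and "contains m H n G"
  shows "contains k F n G"
proof -
  obtain f where f: "strict_mono_on {..<k} f" "f ` {..<k} \<subseteq> {..<m}"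
      "\<forall>(i,j)\<in>F. (f i, f j) \<in> H" using assms(1) unfolding contains_def by blast
  obtain g where g: "strict_mono_on {..<m} g" "g ` {..<m} \<subseteq> {..<n}"
      "\<forall>(i,j)\<in>H. (g i, g j) \<in> G" using assms(2) unfolding contains_def by blast
  have "strict_mono_on {..<k} (g \<circ> f)"
    using f(1,2) g(1) unfolding strict_mono_on_def by (auto simp: image_subset_iff)
  moreover have "(g \<circ> f) ` {..<k} \<subseteq> {..<n}" using f(2) g(2) by auto
  moreover have "\<forall>(i,j)\<in>F. ((g \<circ> f) i, (g \<circ> f) j) \<in> G" using f(3) g(3) by auto
  ultimately show ?thesis unfolding contains_def by blast
qed

lemma rho_FG_mono:
  assumes "contains k F m H" and "finite G"
  shows "rho_FG k F n G \<le> rho_FG m H n G"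
proof -
  let ?A = "{real (card G') / real (card G) | G'. G' \<subseteq> G \<and> \<not> contains k F n G'}"
  let ?B = "{real (card G') / real (card G) | G'. G' \<subseteq> G \<and> \<not> contains m H n G'}"
  have sub: "?A \<subseteq> ?B" using contains_trans[OF assms(1)] by blast
  have "?B \<subseteq> (\<lambda>G'. real (card G') / real (card G)) ` Pow G" by blast
  then have "finite ?B" using assms(2) by (meson finite_Pow_iff finite_imageI finite_subset)
  then show ?thesis unfolding rho_FG_def
    by (intro Max_mono) (use sub in auto)
qed

lemma rho_FG_nonneg: "0 \<le> rho_FG k F n G"
proof -
  let ?B = "{real (card G') / real (card G) | G'. G' \<subseteq> G \<and> \<not> contains k F n G'}"
  have "finite ?B"
  proof (cases "finite G")
    case True
    have "?B \<subseteq> (\<lambda>G'. real (card G') / real (card G)) ` Pow G" by blast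
    then show ?thesis using True by (meson finite_Pow_iff finite_imageI finite_subset)
  next
    case False
    then have "?B \<subseteq> {0}" by auto
    then show ?thesis using finite_subset by blast
  qed
  then show ?thesis unfolding rho_FG_def by (intro Max_ge) auto
qed

theorem corollary4p2:
  fixes k :: nat and F :: "(nat \<times> nat) set"
  assumes "ordgraph k F"
    and "\<not> has_monotone_P2 F"
  shows "rho k F \<le> rho (2 * k) (H_edges k)"
proof -
  have c: "contains k F (2*k) (H_edges k)" using embed_F_H[OF assms] .
  let ?A = "{rho_FG k F n G | n G. ordgraph n G \<and> G \<noteq> {}}"
  let ?B = "{rho_FG (2*k) (H_edges k) n G | n G. ordgraph n G \<and> G \<noteq> {}}"
  have "ordgraph 2 {(0,1)}" unfolding ordgraph_def by auto
  then have ne: "?B \<noteq> {}" by blast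
  have bd: "bdd_below ?A" unfolding bdd_below_def using rho_FG_nonneg by blast
  have "\<exists>a\<in>?A. a \<le> b" if bB: "b \<in> ?B" for b
  proof -
    obtain n G where b: "b = rho_FG (2*k) (H_edges k) n G" "ordgraph n G" "G \<noteq> {}"
      using bB by auto
    have "finite G" using b(2) unfolding ordgraph_def
      by (rule finite_subset) (rule finite_subset[of _ "{..<n} \<times> {..<n}"], auto)
    then have "rho_FG k F n G \<le> b" using rho_FG_mono[OF c] b(1) by simp
    then show ?thesis using b by blast
  qed
  then show ?thesis unfolding rho_def by (intro cInf_mono[OF ne bd]) auto
qed

end
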